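(* Let $\mathscr{I}_1\subseteq(0,1)$ and $\mathscr{I}_2\subseteq\mathbb{R}$, and let $f_\nu^\alpha:\mathbb{R}\to\mathbb{R}$ ($\nu\in\mathscr{I}_1$, $\alpha\in\mathscr{I}_2$) be even continuous functions and $\vartheta_\nu^\alpha\in[0,\infty)$ be numbers such that for some $C>0$, $\|f_\nu^\alpha\|_{L^\infty}\le C$, $\vartheta_\nu^\alpha\le C\nu^2$, and $\operatorname{Lip}(f_\nu^\alpha)\le C\nu^{-1}$ for all $\nu,\alpha$ (where $\operatorname{Lip}(f)=\sup_{x\ne y}|f(x)-f(y)|/|x-y|$). Fix $q_*>0$. (i) Define \[ G_\nu^\alpha(X):=\int_0^Xf_\nu^\alpha(s+\vartheta_\nu^\alpha\tanh(q_*s))\,ds-\int_0^{X+\vartheta_\nu^\alpha\tanh(q_*X)}f_\nu^\alpha(s)\,ds . \] Then there exist $L_\nu^{\alpha,\infty}\in\mathbb{R}$ such that \[ \sup_{\nu\in\mathscr{I}_1,\alpha\in\mathscr{I}_2}\left[\nu^{-1}\left(\sup_{X\in\mathbb{R}}e^{q_*|X|}\left|G_\nu^\alpha(X)-\nu L_\nu^{\alpha,\infty}\tanh(q_*X)\right|\right)+|L_\nu^{\alpha,\infty}|\right]<\infty . \] (ii) Define $H_\nu^\alpha(X):=f_\nu^\alpha(X+\nu+\vartheta_\nu^\alpha\tanh(q_*X+q_*\nu))-f_\nu^\alpha(X+\nu+\vartheta_\nu^\alpha\tanh(q_*X))$. Then \[ \sup_{\nu\in\mathscr{I}_1,\alpha\in\mathscr{I}_2,X\in\mathbb{R}}\nu^{-2}e^{2q_*|X|}|H_\nu^\alpha(X)|<\infty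 . \] *)

theory Defs
  imports "HOL-Analysis.Analysis"
begin

definition oint :: "real \<Rightarrow> real \<Rightarrow> (real \<Rightarrow> real) \<Rightarrow> real" where
  "oint a b g = (if a \<le> b then integral {a..b} g else - integral {b..a} g)"

definition Gfun :: "(real \<Rightarrow> real) \<Rightarrow> real \<Rightarrow> real \<Rightarrow> real \<Rightarrow> real" where
  "Gfun f th q X = oint 0 X (\<lambda>s. f (s + th * tanh (q * s)))
                  - oint 0 (X + th * tanh (q * X)) f"

definition Hfun :: "(real \<Rightarrow> real) \<Rightarrow> real \<Rightarrow> real \<Rightarrow> real \<Rightarrow> real \<Rightarrow> real" where
  "Hfun f th q \<nu> X = f (X + \<nu> + th * tanh (q * X + q * \<nu>)) - f (X + \<nu> + th * tanh (q * X))"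

end

theory Submission imports Defs begin

lemma oint_deriv:
  fixes h :: "real \<Rightarrow> real"
  assumes ch: "continuous_on UNIV h"
  shows "((\<lambda>y. oint 0 y h) has_real_derivative h x) (at x)"
proof -
  define a where "a = min 0 x - 1"
  have int: "h integrable_on {u..v}" for u v
    by (rule integrable_continuous_real) (use ch continuous_on_subset in blast)
  have eq: "oint 0 y h = integral {a..y} h - integral {a..0} h" if "y \<in> {a<..}" for y
  proof (cases "0 \<le> y")
    case True
    have "integral {a..0} h + integral {0..y} h = integral {a..y} h"
      by (rule Henstock_Kurzweil_Integration.integral_combine) (use that True a_def int in auto)
    then show ?thesis using True by (simp add: oint_def)
  next
    case False
    have "integral {a..y} h + integral {y..0} h = integral {a..0} h"
      by (rule Henstock_Kurzweil_Integration.integral_combine) (use that False a_def int in auto)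
    then show ?thesis using False by (simp add: oint_def)
  qed
  have "((\<lambda>u. integral {a..u} h) has_vector_derivative h x) (at x within {a..x+1})"
    by (rule integral_has_vector_derivative) (use ch continuous_on_subset a_def in auto)
  moreover have "x \<in> interior {a..x+1}" using a_def by auto
  ultimately have "((\<lambda>u. integral {a..u} h) has_vector_derivative h x) (at x)"
    by (metis at_within_interior)
  then have "((\<lambda>u. integral {a..u} h - integral {a..0} h) has_real_derivative h x) (at x)"
    by (auto simp: has_real_derivative_iff_has_vector_derivative intro!: derivative_eq_intros)
  then show ?thesis
    by (rule has_field_derivative_transform_within_open[where S="{a<..}"]) (use eq a_def in auto)
qed


lemma G_deriv:
  fixes f :: "real \<Rightarrow> real"
  assumes cf: "continuous_on UNIV f"
  shows "((\<lambda>X. Gfun f th q X) has_real_derivative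
           (- th * q * (1 - tanh (q*X)^2) * f (X + th * tanh (q*X)))) (at X)"
proof -
  have ct: "continuous_on UNIV (\<lambda>s. s + th * tanh (q * s))"
    by (intro continuous_intros) (auto simp: cosh_real_pos[THEN less_imp_neq, symmetric])
  have cg: "continuous_on UNIV (\<lambda>s. f (s + th * tanh (q * s)))"
    using continuous_on_compose2[OF cf ct] by auto
  have d1: "((\<lambda>X. oint 0 X (\<lambda>s. f (s + th * tanh (q * s)))) has_real_derivative f (X + th * tanh (q*X))) (at X)"
    using oint_deriv[OF cg] by simp
  have di: "((\<lambda>X. X + th * tanh (q * X)) has_real_derivative (1 + th * ((1 - tanh (q*X)^2) * q))) (at X)"
    by (auto intro!: derivative_eq_intros simp: cosh_real_pos[THEN less_imp_neq, symmetric])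
  have d2: "((\<lambda>X. oint 0 (X + th * tanh (q * X)) f) has_real_derivative
      f (X + th * tanh (q*X)) * (1 + th * ((1 - tanh (q*X)^2) * q))) (at X)"
    using DERIV_chain2[OF oint_deriv[OF cf] di] .
  show ?thesis
    unfolding Gfun_def using DERIV_diff[OF d1 d2] by (simp add: algebra_simps)
qed

lemma one_minus_tanh: "1 - tanh (x::real) \<le> 2 * exp (-2 * x)"
proof -
  have "1 - tanh x = 2 * exp (-2*x) / (1 + exp (-2*x))"
  proof -
    have p: "1 + exp (-2*x) > 0" by (simp add: add_pos_pos)
    show ?thesis unfolding tanh_real_altdef using p by (simp add: field_simps del: mult_minus_left)
  qed
  also have "\<dots> \<le> 2 * exp (-2 * x)"
    by (simp add: divide_le_eq add_pos_pos)  
  finally show ?thesis .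
qed

lemma sech2_bound: "1 - tanh (z::real)^2 \<le> 4 * exp (-2 * \<bar>z\<bar>)"
proof -
  have "tanh z ^ 2 = tanh \<bar>z\<bar> ^ 2" by simp
  have "1 - tanh \<bar>z\<bar> ^ 2 = (1 - tanh \<bar>z\<bar>) * (1 + tanh \<bar>z\<bar>)" by (simp add: power2_eq_square algebra_simps)
  also have "\<dots> \<le> (2 * exp (-2 * \<bar>z\<bar>)) * 2"
    apply (rule mult_mono) using one_minus_tanh[of "\<bar>z\<bar>"] tanh_real_lt_1[of "\<bar>z\<bar>"] by auto
  finally show ?thesis by simp
qed


lemma partG:
  fixes f :: "real \<Rightarrow> real"
  assumes cf: "continuous_on UNIV f"
    and even: "\<And>x. f (-x) = f x"
    and bnd: "\<And>x. \<bar>f x\<bar> \<le> C"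
    and th: "0 \<le> th" and q: "0 < q"
  shows "\<exists>Gi. \<bar>Gi\<bar> \<le> th * C \<and>
           (\<forall>X. \<bar>Gfun f th q X - Gi * tanh (q*X)\<bar> \<le> 4 * th * C * exp (-2 * q * \<bar>X\<bar>))"
proof -
  define G where "G = Gfun f th q"
  define D' where "D' X = - th * q * (1 - tanh (q*X)^2) * f (X + th * tanh (q*X))" for X
  have dG: "(G has_real_derivative D' X) (at X)" for X
    unfolding G_def D'_def by (rule G_deriv[OF cf])
  have s_nn: "0 \<le> 1 - tanh (q*X)^2" for X
  proof -
    have "\<bar>tanh (q*X)\<bar> \<le> 1" using tanh_real_lt_1[of "q*X"] tanh_real_gt_neg1[of "q*X"] by auto
    then have "tanh (q*X)^2 \<le> 1" by (simp add: abs_square_le_1) 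
    then show ?thesis by simp
  qed
  have dT: "((\<lambda>X. th * C * tanh (q*X)) has_real_derivative th * C * ((1 - tanh (q*X)^2) * q)) (at X)" for X
    by (auto intro!: derivative_eq_intros simp: cosh_real_pos[THEN less_imp_neq, symmetric])
  have contG: "continuous_on UNIV G"
    using dG by (meson DERIV_isCont continuous_at_imp_continuous_on)
  have contT: "continuous_on UNIV (\<lambda>X. th * C * tanh (q*X))"
    using dT by (meson DERIV_isCont continuous_at_imp_continuous_on)
  have up: "G Y - G X \<le> th * C * (tanh (q*Y) - tanh (q*X))" if "X \<le> Y" for X Y
  proof -
    have "(\<lambda>X. th * C * tanh (q*X) - G X) X \<le> (\<lambda>X. th * C * tanh (q*X) - G X) Y"
    proof (rule DERIV_nonneg_imp_increasing_open[OF that])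
      fix x
      have "0 \<le> th * q * (1 - tanh (q*x)^2) * (C + f (x + th * tanh (q*x)))"
        using th q s_nn[of x] bnd[of "x + th * tanh (q*x)"] by (intro mult_nonneg_nonneg) (auto simp: abs_le_iff)
      moreover have "th * C * ((1 - tanh (q*x)^2) * q) - D' x = th * q * (1 - tanh (q*x)^2) * (C + f (x + th * tanh (q*x)))"
        by (simp add: D'_def algebra_simps)
      ultimately show "\<exists>y. ((\<lambda>X. th * C * tanh (q*X) - G X) has_real_derivative y) (at x) \<and> 0 \<le> y"
        using DERIV_diff[OF dT dG, of x] by metis
    next
      show "continuous_on {X..Y} (\<lambda>X. th * C * tanh (q * X) - G X)"
        by (intro continuous_on_diff continuous_on_subset[OF contT] continuous_on_subset[OF contG]) auto
    qed
    then show ?thesis by (simp add: algebra_simps)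
  qed
  have lo: "G X - G Y \<le> th * C * (tanh (q*Y) - tanh (q*X))" if "X \<le> Y" for X Y
  proof -
    have "(\<lambda>X. th * C * tanh (q*X) + G X) X \<le> (\<lambda>X. th * C * tanh (q*X) + G X) Y"
    proof (rule DERIV_nonneg_imp_increasing_open[OF that])
      fix x
      have "0 \<le> th * q * (1 - tanh (q*x)^2) * (C - f (x + th * tanh (q*x)))"
        using th q s_nn[of x] bnd[of "x + th * tanh (q*x)"] by (intro mult_nonneg_nonneg) (auto simp: abs_le_iff)
      moreover have "th * C * ((1 - tanh (q*x)^2) * q) + D' x = th * q * (1 - tanh (q*x)^2) * (C - f (x + th * tanh (q*x)))"
        by (simp add: D'_def algebra_simps)
      ultimately show "\<exists>y. ((\<lambda>X. th * C * tanh (q*X) + G X) has_real_derivative y) (at x) \<and> 0 \<le> y"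
        using DERIV_add[OF dT dG, of x] by metis
    next
      show "continuous_on {X..Y} (\<lambda>X. th * C * tanh (q * X) + G X)"
        by (intro continuous_on_add continuous_on_subset[OF contT] continuous_on_subset[OF contG]) auto
    qed
    then show ?thesis by (simp add: algebra_simps)
  qed
  have absd: "\<bar>G Y - G X\<bar> \<le> th * C * (1 - tanh (q*X))" if "X \<le> Y" for X Y
  proof -
    have "th * C * (tanh (q*Y) - tanh (q*X)) \<le> th * C * (1 - tanh (q*X))"
      using tanh_real_lt_1[of "q*Y"] th bnd[of 0] by (intro mult_left_mono) auto
    then show ?thesis using up[OF that] lo[OF that] by linarith
  qed
  have G0: "G 0 = 0" unfolding G_def Gfun_def oint_def by simp
  have odd: "G (-X) = - G X" for X
  proof -
    have "((\<lambda>X. G X + G (-X)) has_real_derivative 0) (at x)" for x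
    proof -
      have "((\<lambda>X. G X + G (-X)) has_real_derivative D' x + D' (-x) * (-1)) (at x)"
        by (intro DERIV_add dG DERIV_chain2[OF dG] derivative_eq_intros) auto
      moreover have "D' (-x) = D' x"
        unfolding D'_def using even[of "x + th * tanh (q*x)"] by (simp add: algebra_simps)
      ultimately show ?thesis by simp
    qed
    then have "(\<lambda>X. G X + G (-X)) X = (\<lambda>X. G X + G (-X)) 0" by (intro DERIV_isconst_all allI)
    then show ?thesis using G0 by simp
  qed
  have Gb: "\<bar>G (real n)\<bar> \<le> th * C" for n
    using absd[of 0 "real n"] G0 by simp
  have Tb: "\<bar>th * C * tanh (q * real n)\<bar> \<le> th * C" for n
  proof -
    have "\<bar>tanh (q * real n)\<bar> \<le> 1" using tanh_real_lt_1[of "q*real n"] tanh_real_gt_neg1[of "q*real n"] by auto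
    then show ?thesis using th bnd[of 0] by (simp add: abs_mult mult_left_le)
  qed
  obtain LD where LD: "(\<lambda>n. th * C * tanh (q * real n) + G (real n)) \<longlonglongrightarrow> LD"
  proof (rule incseq_convergent[of _ "2 * th * C"])
    show "incseq (\<lambda>n. th * C * tanh (q * real n) + G (real n))"
    proof (unfold incseq_def, intro allI impI)
      fix m n :: nat assume "m \<le> n"
      then have "real m \<le> real n" by simp
      from lo[OF this] show "th * C * tanh (q * real m) + G (real m) \<le> th * C * tanh (q * real n) + G (real n)" by (simp add: algebra_simps)
    qed
    show "\<forall>i. th * C * tanh (q * real i) + G (real i) \<le> 2 * th * C"
    proof
      fix i
      show "th * C * tanh (q * real i) + G (real i) \<le> 2 * th * C"
        using Gb[of i] Tb[of i] by (simp add: abs_le_iff)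
    qed
  qed
  obtain LE where LE: "(\<lambda>n. th * C * tanh (q * real n) - G (real n)) \<longlonglongrightarrow> LE"
  proof (rule incseq_convergent[of _ "2 * th * C"])
    show "incseq (\<lambda>n. th * C * tanh (q * real n) - G (real n))"
    proof (unfold incseq_def, intro allI impI)
      fix m n :: nat assume "m \<le> n"
      then have "real m \<le> real n" by simp
      from up[OF this] show "th * C * tanh (q * real m) - G (real m) \<le> th * C * tanh (q * real n) - G (real n)" by (simp add: algebra_simps)
    qed
    show "\<forall>i. th * C * tanh (q * real i) - G (real i) \<le> 2 * th * C"
    proof
      fix i
      show "th * C * tanh (q * real i) - G (real i) \<le> 2 * th * C"
        using Gb[of i] Tb[of i] by (simp add: abs_le_iff)
    qed
  qed
  define Gi where "Gi = (LD - LE) / 2"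
  have GL: "(\<lambda>n. G (real n)) \<longlonglongrightarrow> Gi"
  proof -
    have "(\<lambda>n. ((th * C * tanh (q * real n) + G (real n)) - (th * C * tanh (q * real n) - G (real n))) / 2) \<longlonglongrightarrow> Gi"
      unfolding Gi_def by (intro tendsto_intros LD LE) simp
    then show ?thesis by simp
  qed
  have lim_b: "\<bar>Gi - G X\<bar> \<le> th * C * (1 - tanh (q*X))" if "0 \<le> X" for X
  proof (rule tendsto_upperbound)
    show "((\<lambda>n. \<bar>G (real n) - G X\<bar>) \<longlongrightarrow> \<bar>Gi - G X\<bar>) sequentially"
      by (intro tendsto_intros GL)
    show "\<forall>\<^sub>F n in sequentially. \<bar>G (real n) - G X\<bar> \<le> th * C * (1 - tanh (q * X))"
      unfolding eventually_sequentially
    proof (intro exI[of _ "nat \<lceil>X\<rceil>"] allI impI)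
      fix n assume "nat \<lceil>X\<rceil> \<le> n"
      then have "X \<le> real n" by linarith
      then show "\<bar>G (real n) - G X\<bar> \<le> th * C * (1 - tanh (q * X))" by (rule absd)
    qed
  qed simp
  have Gib: "\<bar>Gi\<bar> \<le> th * C" using lim_b[of 0] G0 by simp
  have pos: "\<bar>G X - Gi * tanh (q*X)\<bar> \<le> 4 * th * C * exp (-2 * q * X)" if "0 \<le> X" for X
  proof -
    have t1: "0 \<le> 1 - tanh (q*X)" using tanh_real_lt_1[of "q*X"] by simp
    have "G X - Gi * tanh (q*X) = (G X - Gi) + Gi * (1 - tanh (q*X))" by (simp add: algebra_simps)
    then have "\<bar>G X - Gi * tanh (q*X)\<bar> \<le> \<bar>G X - Gi\<bar> + \<bar>Gi\<bar> * (1 - tanh (q*X))"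
      using abs_triangle_ineq[of "G X - Gi" "Gi * (1 - tanh (q*X))"] t1 by (simp add: abs_mult)
    also have "\<dots> \<le> th * C * (1 - tanh (q*X)) + th * C * (1 - tanh (q*X))"
      using lim_b[OF that] Gib t1 by (intro add_mono mult_right_mono) (auto simp: abs_minus_commute)
    also have "\<dots> = 2 * (th * C) * (1 - tanh (q*X))" by simp
    also have "\<dots> \<le> 2 * (th * C) * (2 * exp (-2 * (q*X)))"
      using th bnd[of 0] one_minus_tanh[of "q*X"] by (intro mult_left_mono) auto
    finally show ?thesis by (simp add: algebra_simps)
  qed
  show ?thesis
  proof (intro exI[of _ Gi] conjI allI)
    show "\<bar>Gi\<bar> \<le> th * C" by (rule Gib)
    fix X
    show "\<bar>Gfun f th q X - Gi * tanh (q * X)\<bar> \<le> 4 * th * C * exp (- 2 * q * \<bar>X\<bar>)"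
    proof (cases "0 \<le> X")
      case True then show ?thesis using pos[OF True] by (simp add: G_def)
    next
      case False
      have "\<bar>G (-X) - Gi * tanh (q*(-X))\<bar> \<le> 4 * th * C * exp (-2 * q * (-X))"
        using pos[of "-X"] False by simp
      moreover have "\<bar>G (-X) - Gi * tanh (q*(-X))\<bar> = \<bar>G X - Gi * tanh (q*X)\<bar>"
      proof -
        have "G (-X) - Gi * tanh (q*(-X)) = -(G X - Gi * tanh (q*X))" by (simp add: odd algebra_simps)
        then show ?thesis by (simp only: abs_minus_cancel)
      qed
      ultimately show ?thesis using False by (simp add: G_def)
    qed
  qed
qed


lemma tanh_diff:
  fixes a h :: real assumes h: "0 < h"
  shows "\<bar>tanh (a + h) - tanh a\<bar> \<le> 4 * h * exp (2*h) * exp (-2 * \<bar>a\<bar>)"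
proof -
  have "\<And>x. a \<le> x \<Longrightarrow> x \<le> a + h \<Longrightarrow> (tanh has_real_derivative (1 - tanh x ^ 2)) (at x)"
    by (auto intro!: derivative_eq_intros simp: cosh_real_pos[THEN less_imp_neq, symmetric])
  then obtain z where z: "a < z" "z < a + h" and eq: "tanh (a + h) - tanh a = (a + h - a) * (1 - tanh z ^ 2)"
    using MVT2[of a "a + h" tanh "\<lambda>x. 1 - tanh x ^ 2"] h by auto
  have nn: "0 \<le> 1 - tanh z ^ 2"
  proof -
    have "\<bar>tanh z\<bar> \<le> 1" using tanh_real_lt_1[of z] tanh_real_gt_neg1[of z] by auto
    then show ?thesis by (simp add: abs_square_le_1)
  qed
  have "exp (-2 * \<bar>z\<bar>) \<le> exp (2*h) * exp (-2 * \<bar>a\<bar>)"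
    using z by (simp add: exp_add[symmetric])
  then have "1 - tanh z ^ 2 \<le> 4 * (exp (2*h) * exp (-2 * \<bar>a\<bar>))"
    using sech2_bound[of z] by linarith
  then have "h * (1 - tanh z ^ 2) \<le> h * (4 * (exp (2*h) * exp (-2 * \<bar>a\<bar>)))"
    using h by (intro mult_left_mono) auto
  then show ?thesis using eq nn h by (simp add: abs_mult algebra_simps)
qed


lemma partH:
  fixes f :: "real \<Rightarrow> real"
  assumes nu: "0 < \<nu>" "\<nu> < 1" and C: "0 < C" and q: "0 < q"
    and th: "0 \<le> th" "th \<le> C * \<nu>^2"
    and lip: "(C / \<nu>)-lipschitz_on UNIV f"
  shows "(1 / \<nu>^2) * exp (2 * q * \<bar>X\<bar>) * \<bar>Hfun f th q \<nu> X\<bar> \<le> 4 * C^2 * q * exp (2*q)"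
proof -
  define d where "d = \<bar>tanh (q*X + q*\<nu>) - tanh (q*X)\<bar>"
  have "\<bar>Hfun f th q \<nu> X\<bar> \<le> (C / \<nu>) * dist (X + \<nu> + th * tanh (q * X + q * \<nu>)) (X + \<nu> + th * tanh (q * X))"
    unfolding Hfun_def using lipschitz_onD[OF lip, of "X + \<nu> + th * tanh (q * X + q * \<nu>)" "X + \<nu> + th * tanh (q * X)"]
    by (simp add: dist_real_def)
  also have "dist (X + \<nu> + th * tanh (q * X + q * \<nu>)) (X + \<nu> + th * tanh (q * X)) = th * d"
    unfolding d_def dist_real_def using th by (simp add: abs_mult right_diff_distrib[symmetric])
  finally have H1: "\<bar>Hfun f th q \<nu> X\<bar> \<le> (C / \<nu>) * (th * d)" .
  have "d \<le> 4 * (q*\<nu>) * exp (2*(q*\<nu>)) * exp (-2 * \<bar>q*X\<bar>)"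
    unfolding d_def using tanh_diff[of "q*\<nu>" "q*X"] q nu by simp
  also have "\<dots> \<le> 4 * (q*\<nu>) * exp (2*q) * exp (-2 * q * \<bar>X\<bar>)"
  proof -
    have "q*\<nu> \<le> q" using q nu by (simp add: mult_left_le)
    then have "exp (2*(q*\<nu>)) \<le> exp (2*q)" by simp
    moreover have "exp (-2 * \<bar>q*X\<bar>) = exp (-2 * q * \<bar>X\<bar>)" using q by (simp add: abs_mult)
    moreover have "0 \<le> 4 * (q*\<nu>)" using q nu by simp
    ultimately show ?thesis
      by (metis exp_ge_zero mult_left_mono mult_right_mono)
  qed
  finally have d: "d \<le> 4 * (q*\<nu>) * exp (2*q) * exp (-2 * q * \<bar>X\<bar>)" .
  have dnn: "0 \<le> d" unfolding d_def by simp
  have "(C / \<nu>) * (th * d) \<le> (C / \<nu>) * ((C * \<nu>^2) * (4 * (q*\<nu>) * exp (2*q) * exp (-2 * q * \<bar>X\<bar>)))"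
    using C nu th d dnn by (intro mult_left_mono mult_mono) auto
  also have "\<dots> = \<nu>^2 * (4 * C^2 * q * exp (2*q)) * exp (-2 * q * \<bar>X\<bar>)"
    using nu by (simp add: field_simps power2_eq_square)
  finally have H2: "\<bar>Hfun f th q \<nu> X\<bar> \<le> \<nu>^2 * (4 * C^2 * q * exp (2*q)) * exp (-2 * q * \<bar>X\<bar>)"
    using H1 by linarith
  have "(1 / \<nu>^2) * exp (2 * q * \<bar>X\<bar>) * \<bar>Hfun f th q \<nu> X\<bar>
      \<le> (1 / \<nu>^2) * exp (2 * q * \<bar>X\<bar>) * (\<nu>^2 * (4 * C^2 * q * exp (2*q)) * exp (-2 * q * \<bar>X\<bar>))"
    using H2 by (intro mult_left_mono) auto
  also have "\<dots> = 4 * C^2 * q * exp (2*q)"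
    using nu by (simp add: field_simps exp_add[symmetric])
  finally show ?thesis .
qed

theorem lemmaB4:
  fixes I1 I2 :: "real set"
    and f :: "real \<Rightarrow> real \<Rightarrow> real \<Rightarrow> real"
    and \<theta> :: "real \<Rightarrow> real \<Rightarrow> real"
    and C q :: real
  assumes I1: "I1 \<subseteq> {0<..<1}"
    and C_pos: "C > 0"
    and q_pos: "q > 0"
    and even: "\<And>\<nu> \<alpha> x. \<nu> \<in> I1 \<Longrightarrow> \<alpha> \<in> I2 \<Longrightarrow> f \<nu> \<alpha> (- x) = f \<nu> \<alpha> x"
    and cont: "\<And>\<nu> \<alpha>. \<nu> \<in> I1 \<Longrightarrow> \<alpha> \<in> I2 \<Longrightarrow> continuous_on UNIV (f \<nu> \<alpha>)"
    and bnd: "\<And>\<nu> \<alpha> x. \<nu> \<in> I1 \<Longrightarrow> \<alpha> \<in> I2 \<Longrightarrow> \<bar>f \<nu> \<alpha> x\<bar> \<le> C"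
    and th_nonneg: "\<And>\<nu> \<alpha>. \<nu> \<in> I1 \<Longrightarrow> \<alpha> \<in> I2 \<Longrightarrow> 0 \<le> \<theta> \<nu> \<alpha>"
    and th_bnd: "\<And>\<nu> \<alpha>. \<nu> \<in> I1 \<Longrightarrow> \<alpha> \<in> I2 \<Longrightarrow> \<theta> \<nu> \<alpha> \<le> C * \<nu>\<^sup>2"
    and lip: "\<And>\<nu> \<alpha>. \<nu> \<in> I1 \<Longrightarrow> \<alpha> \<in> I2 \<Longrightarrow> (C / \<nu>)-lipschitz_on UNIV (f \<nu> \<alpha>)"
  shows "(\<exists>L :: real \<Rightarrow> real \<Rightarrow> real. \<exists>M. \<forall>\<nu>\<in>I1. \<forall>\<alpha>\<in>I2. \<forall>X.
            (1 / \<nu>) * (exp (q * \<bar>X\<bar>) *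
               \<bar>Gfun (f \<nu> \<alpha>) (\<theta> \<nu> \<alpha>) q X - \<nu> * L \<nu> \<alpha> * tanh (q * X)\<bar>)
            + \<bar>L \<nu> \<alpha>\<bar> \<le> M)
       \<and> (\<exists>M. \<forall>\<nu>\<in>I1. \<forall>\<alpha>\<in>I2. \<forall>X.
            (1 / \<nu>\<^sup>2) * exp (2 * q * \<bar>X\<bar>) * \<bar>Hfun (f \<nu> \<alpha>) (\<theta> \<nu> \<alpha>) q \<nu> X\<bar> \<le> M)"
proof
  define P where "P \<nu> \<alpha> Gi \<longleftrightarrow> \<bar>Gi\<bar> \<le> \<theta> \<nu> \<alpha> * C \<and>
           (\<forall>X. \<bar>Gfun (f \<nu> \<alpha>) (\<theta> \<nu> \<alpha>) q X - Gi * tanh (q*X)\<bar> \<le> 4 * \<theta> \<nu> \<alpha> * C * exp (-2 * q * \<bar>X\<bar>))"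
    for \<nu> \<alpha> Gi
  define Gf where "Gf \<nu> \<alpha> = (SOME Gi. P \<nu> \<alpha> Gi)" for \<nu> \<alpha>
  have PG: "P \<nu> \<alpha> (Gf \<nu> \<alpha>)" if "\<nu> \<in> I1" "\<alpha> \<in> I2" for \<nu> \<alpha>
    unfolding Gf_def
    by (rule someI_ex, unfold P_def, rule partG)
       (use that even cont bnd th_nonneg q_pos in auto)
  show "\<exists>L :: real \<Rightarrow> real \<Rightarrow> real. \<exists>M. \<forall>\<nu>\<in>I1. \<forall>\<alpha>\<in>I2. \<forall>X.
            (1 / \<nu>) * (exp (q * \<bar>X\<bar>) *
               \<bar>Gfun (f \<nu> \<alpha>) (\<theta> \<nu> \<alpha>) q X - \<nu> * L \<nu> \<alpha> * tanh (q * X)\<bar>)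
            + \<bar>L \<nu> \<alpha>\<bar> \<le> M"
  proof (intro exI[of _ "\<lambda>\<nu> \<alpha>. Gf \<nu> \<alpha> / \<nu>"] exI[of _ "5 * C^2"] ballI allI)
    fix \<nu> \<alpha> X assume nu: "\<nu> \<in> I1" and al: "\<alpha> \<in> I2"
    have n0: "0 < \<nu>" "\<nu> < 1" using nu I1 by auto
    define th where "th = \<theta> \<nu> \<alpha>"
    have th0: "0 \<le> th" and th1: "th \<le> C * \<nu>^2" using th_nonneg[OF nu al] th_bnd[OF nu al] th_def by auto
    have b1: "\<bar>Gf \<nu> \<alpha>\<bar> \<le> th * C" and b2: "\<bar>Gfun (f \<nu> \<alpha>) th q X - Gf \<nu> \<alpha> * tanh (q*X)\<bar> \<le> 4 * th * C * exp (-2 * q * \<bar>X\<bar>)"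
      using PG[OF nu al] unfolding P_def th_def by auto
    have eq: "\<nu> * (Gf \<nu> \<alpha> / \<nu>) = Gf \<nu> \<alpha>" using n0 by simp
    have e1: "exp (q * \<bar>X\<bar>) * exp (-2 * q * \<bar>X\<bar>) \<le> 1"
      using q_pos by (simp add: exp_add[symmetric])
    have "exp (q * \<bar>X\<bar>) * \<bar>Gfun (f \<nu> \<alpha>) th q X - Gf \<nu> \<alpha> * tanh (q*X)\<bar>
          \<le> exp (q * \<bar>X\<bar>) * (4 * th * C * exp (-2 * q * \<bar>X\<bar>))"
      using b2 by (intro mult_left_mono) auto
    also have "\<dots> = 4 * th * C * (exp (q * \<bar>X\<bar>) * exp (-2 * q * \<bar>X\<bar>))" by simp
    also have "\<dots> \<le> 4 * th * C * 1"
      using e1 th0 C_pos by (intro mult_left_mono) auto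
    finally have k: "exp (q * \<bar>X\<bar>) * \<bar>Gfun (f \<nu> \<alpha>) th q X - Gf \<nu> \<alpha> * tanh (q*X)\<bar> \<le> 4 * th * C" by simp
    have "(1 / \<nu>) * (exp (q * \<bar>X\<bar>) * \<bar>Gfun (f \<nu> \<alpha>) th q X - Gf \<nu> \<alpha> * tanh (q*X)\<bar>) + \<bar>Gf \<nu> \<alpha> / \<nu>\<bar>
        \<le> (1 / \<nu>) * (4 * th * C) + (th * C) / \<nu>"
      using k b1 n0 by (intro add_mono mult_left_mono) (auto simp: divide_right_mono)
    also have "\<dots> = 5 * th * C / \<nu>" by (simp add: field_simps)
    also have "\<dots> \<le> 5 * (C * \<nu>^2) * C / \<nu>"
      using th1 C_pos n0 by (intro divide_right_mono mult_right_mono) auto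
    also have "\<dots> = 5 * C^2 * \<nu>" using n0 by (simp add: field_simps power2_eq_square)
    also have "\<dots> \<le> 5 * C^2" using n0 C_pos by simp
    finally show "(1 / \<nu>) * (exp (q * \<bar>X\<bar>) *
               \<bar>Gfun (f \<nu> \<alpha>) (\<theta> \<nu> \<alpha>) q X - \<nu> * (Gf \<nu> \<alpha> / \<nu>) * tanh (q * X)\<bar>)
            + \<bar>Gf \<nu> \<alpha> / \<nu>\<bar> \<le> 5 * C^2"
      using eq unfolding th_def by simp
  qed
next
  show "\<exists>M. \<forall>\<nu>\<in>I1. \<forall>\<alpha>\<in>I2. \<forall>X.
            (1 / \<nu>\<^sup>2) * exp (2 * q * \<bar>X\<bar>) * \<bar>Hfun (f \<nu> \<alpha>) (\<theta> \<nu> \<alpha>) q \<nu> X\<bar> \<le> M"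
  proof (intro exI[of _ "4 * C^2 * q * exp (2*q)"] ballI allI)
    fix \<nu> \<alpha> X assume nu: "\<nu> \<in> I1" and al: "\<alpha> \<in> I2"
    have n0: "0 < \<nu>" "\<nu> < 1" using nu I1 by auto
    show "(1 / \<nu>\<^sup>2) * exp (2 * q * \<bar>X\<bar>) * \<bar>Hfun (f \<nu> \<alpha>) (\<theta> \<nu> \<alpha>) q \<nu> X\<bar> \<le> 4 * C^2 * q * exp (2*q)"
      by (rule partH[OF n0 C_pos q_pos th_nonneg[OF nu al] th_bnd[OF nu al] lip[OF nu al]])
  qed
qed

end
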